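(* Let $\mathrm{ocDAG}$ be the set of all ordered connected directed acyclic graphs, and let $\mathrm{ocROUTING} = \{\mathrm{routing}(\vec{G})\}_{\vec{G}\in\mathrm{ocDAG}}$. The unitary router $$\mathrm{router}: \mathrm{ocDAG} \rightarrow \mathrm{ocROUTING},\qquad \vec{G}\mapsto \mathrm{routing}(\vec{G})$$ is a bijection.
   Context: A topological ordering of a directed graph $G=(V,E)$ is a bijection $o: V\to\{1,\dots,|V|\}$ such that for every directed edge $(v_j,v_k)\in E$ one has $o(v_j)<o(v_k)$; a directed graph is acyclic (a DAG) iff it admits a topological ordering. An ordered DAG is a DAG $(V,E)$ with $V=\{1,\dots,|V|\}$ such that the identity map $j\mapsto j$ is a topological ordering. For a DAG $G=(V,E)$ with topological ordering $o$, the induced ordered DAG is $\vec{G}^{(o)} = (\{o(v)\,|\,v\in V\},\{(o(v_j),o(v_k))\,|\,(v_j,v_k)\in E\})$. $\mathrm{ocDAG}$ denotes the set of all ordered and connected DAGs. For a graph $G=(V,E)$ and vertex $v$, the parents are $P_G(v)=\{w\in V\,|\,(w,v)\in E\}$ and the children are $C_G(v)=\{w\in V\,|\,(v,w)\in E\}$. An ECM graph is a connected DAG $G=(V,E)$ whose vertices are partitioned into percepts $\mathcal{S}=\{v\,|\,P_G(v)=\emptyset\}$, actions $\mathcal{A}=\{v\,|\,C_G(v)=\emptyset\}$, and intermediate clips $\mathcal{C}=V\setminus(\mathcal{S}\cup\mathcal{A})$. Given an ECM graph $G=(V,E)$ with topological ordering $o$, a unitary route of $\vec{G}^{(o)}$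 is a sequence of $|V|\times|V|$ unitary matrices $(U^{o(v)})_{v\in\mathcal{C}\cup\mathcal{A}}$, ordered by ascending superscript, whose entries are $U^i_{jk}=u^i_{jk}$ if $j,k\in\{i\}\cup P_{\vec{G}^{(o)}}(i)$ and $U^i_{jk}=\delta_{jk}$ otherwise, where the complex numbers $u^i_{jk}$ are arbitrary subject only to $U^i$ being unitary. The unitary routing $\mathrm{routing}(\vec{G}^{(o)})$ is the set of all unitary routes of $\vec{G}^{(o)}$ (obtained from all admissible choices of the coefficients $u^i_{jk}$). *)

theory Defs
  imports "Jordan_Normal_Form.Schur_Decomposition"
begin

text \<open>An ordered DAG is represented by a pair (n, E): its vertex set is {1..n}
  and E is its edge set; the identity is a topological ordering, i.e. every
  edge (j,k) satisfies j < k.\<close>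

type_synonym odag = "nat \<times> (nat \<times> nat) set"

definition verts :: "odag \<Rightarrow> nat set" where
  "verts G = {1..fst G}"

definition edges :: "odag \<Rightarrow> (nat \<times> nat) set" where
  "edges G = snd G"

definition ordered_dag :: "odag \<Rightarrow> bool" where
  "ordered_dag G \<longleftrightarrow> edges G \<subseteq> verts G \<times> verts G \<and>
     (\<forall>(j,k) \<in> edges G. j < k)"

definition connected_graph :: "odag \<Rightarrow> bool" where
  "connected_graph G \<longleftrightarrow> verts G \<noteq> {} \<and>
     (\<forall>u \<in> verts G. \<forall>v \<in> verts G. (u, v) \<in> (edges G \<union> (edges G)\<inverse>)\<^sup>*)"

definition ocDAG :: "odag set" where
  "ocDAG = {G. ordered_dag G \<and> connected_graph G}"

definition parents :: "odag \<Rightarrow> nat \<Rightarrow> nat set" where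
  "parents G v = {w \<in> verts G. (w, v) \<in> edges G}"

definition children :: "odag \<Rightarrow> nat \<Rightarrow> nat set" where
  "children G v = {w \<in> verts G. (v, w) \<in> edges G}"

definition percepts :: "odag \<Rightarrow> nat set" where
  "percepts G = {v \<in> verts G. parents G v = {}}"

definition actions :: "odag \<Rightarrow> nat set" where
  "actions G = {v \<in> verts G. children G v = {}}"

definition clips :: "odag \<Rightarrow> nat set" where
  "clips G = verts G - (percepts G \<union> actions G)"

definition unitary_mat :: "nat \<Rightarrow> complex mat \<Rightarrow> bool" where
  "unitary_mat n U \<longleftrightarrow> U \<in> carrier_mat n n \<and> U * mat_adjoint U = 1\<^sub>m n"

text \<open>Vertices are 1..n, matrix indices are 0..n-1; entry (j,k) of the paper
  is entry (j-1,k-1) here.\<close>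
definition admissible_unitary :: "odag \<Rightarrow> nat \<Rightarrow> complex mat \<Rightarrow> bool" where
  "admissible_unitary G i U \<longleftrightarrow> unitary_mat (fst G) U \<and>
     (\<forall>j \<in> verts G. \<forall>k \<in> verts G.
        \<not> (j \<in> insert i (parents G i) \<and> k \<in> insert i (parents G i)) \<longrightarrow>
        U $$ (j - 1, k - 1) = (if j = k then 1 else 0))"

definition routing :: "odag \<Rightarrow> complex mat list set" where
  "routing G = {Us. let I = sorted_list_of_set (clips G \<union> actions G) in
      length Us = length I \<and>
      (\<forall>t < length I. admissible_unitary G (I ! t) (Us ! t))}"

definition ocROUTING :: "complex mat list set set" where
  "ocROUTING = routing ` ocDAG"

end

theory Submission
  imports Defs
begin

lemma adj_carrier: "A \<in> carrier_mat n n \<Longrightarrow> mat_adjoint A \<in> carrier_mat n n"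
  unfolding mat_adjoint_def by auto

lemma adj_index: "A \<in> carrier_mat n n \<Longrightarrow> i < n \<Longrightarrow> j < n \<Longrightarrow> mat_adjoint A $$ (i,j) = conjugate (A $$ (j,i))"
  unfolding mat_adjoint_def by (auto simp: mat_of_rows_def)

definition flipm :: "nat \<Rightarrow> nat \<Rightarrow> complex mat" where
  "flipm n j = mat n n (\<lambda>(a,b). if a = b then (if a = j then -1 else 1) else 0)"

lemma flipm_unitary: "unitary_mat n (flipm n j)"
proof -
  have c: "flipm n j \<in> carrier_mat n n" unfolding flipm_def by auto
  have "flipm n j * mat_adjoint (flipm n j) = 1\<^sub>m n"
  proof (rule eq_matI)
    fix a b assume a: "a < dim_row (1\<^sub>m n)" and b: "b < dim_col (1\<^sub>m n)"
    hence an: "a < n" and bn: "b < n" by auto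
    have "(flipm n j * mat_adjoint (flipm n j)) $$ (a,b) =
      (\<Sum>k<n. flipm n j $$ (a,k) * mat_adjoint (flipm n j) $$ (k,b))"
      using an bn c adj_carrier[OF c] by (simp add: times_mat_def scalar_prod_def lessThan_atLeast0 row_def col_def)
    also have "\<dots> = (\<Sum>k<n. (if k = a then flipm n j $$ (a,a) * conjugate (flipm n j $$ (b,a)) else 0))"
      apply (rule sum.cong, simp)
      apply (subst adj_index[OF c])
        apply (auto simp: an bn flipm_def)
      done
    also have "\<dots> = flipm n j $$ (a,a) * conjugate (flipm n j $$ (b,a))"
      using an by simp
    also have "\<dots> = 1\<^sub>m n $$ (a,b)" using an bn by (auto simp: flipm_def)
    finally show "(flipm n j * mat_adjoint (flipm n j)) $$ (a,b) = 1\<^sub>m n $$ (a,b)" .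
  qed (use c adj_carrier[OF c] in auto)
  thus ?thesis using c unfolding unitary_mat_def by auto
qed

lemma one_unitary: "unitary_mat n (1\<^sub>m n)"
proof -
  have c: "(1\<^sub>m n :: complex mat) \<in> carrier_mat n n" by auto
  have "mat_adjoint (1\<^sub>m n :: complex mat) = 1\<^sub>m n"
    using adj_carrier[OF c] by (intro eq_matI) (auto simp: adj_index[OF c] carrier_matD)
  thus ?thesis unfolding unitary_mat_def by auto
qed

definition Dset :: "complex mat list set \<Rightarrow> nat \<Rightarrow> nat set" where
  "Dset R t = {j. 1 \<le> j \<and> (\<exists>Us\<in>R. t < length Us \<and> j \<le> dim_row (Us!t) \<and> Us!t $$ (j-1,j-1) \<noteq> 1)}"

definition Erec :: "complex mat list set \<Rightarrow> (nat \<times> nat) set" where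
  "Erec R = {(w,i). w < i \<and> (\<exists>Us\<in>R. \<exists>t<length Us. w \<in> Dset R t \<and> i \<in> Dset R t \<and> (\<forall>j\<in>Dset R t. j \<le> i))}"

definition recover :: "complex mat list set \<Rightarrow> odag" where
  "recover R = (dim_row (hd (SOME Us. Us \<in> R)), Erec R)"

lemma recover_routing:
  assumes G: "G \<in> ocDAG"
  shows "recover (routing G) = G"
proof -
  define n where "n = fst G"
  define I where "I = sorted_list_of_set (clips G \<union> actions G)"
  define m where "m = length I"
  define R where "R = routing G"
  define S where "S i = insert i (parents G i)" for i
  have od: "ordered_dag G" and cg: "connected_graph G" using G unfolding ocDAG_def by auto
  have V: "verts G = {1..n}" unfolding verts_def n_def by simp
  have Esub: "edges G \<subseteq> verts G \<times> verts G" and Elt: "\<And>j k. (j,k) \<in> edges G \<Longrightarrow> j < k"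
    using od unfolding ordered_dag_def by auto
  have n1: "1 \<le> n" using cg V unfolding connected_graph_def by auto
  have fin: "finite (clips G \<union> actions G)"
    by (rule finite_subset[of _ "verts G"]) (auto simp: clips_def actions_def V)
  have setI: "set I = clips G \<union> actions G" unfolding I_def using fin by simp
  have nA: "n \<in> actions G"
    using n1 Elt Esub unfolding actions_def children_def V by fastforce
  have m1: "m \<ge> 1" unfolding m_def
    using setI nA by (cases I) auto
  have Rdef: "R = {Us. length Us = m \<and> (\<forall>t<m. admissible_unitary G (I!t) (Us!t))}"
    unfolding R_def routing_def I_def m_def Let_def by simp
  have admc: "U \<in> carrier_mat n n" if "admissible_unitary G i U" for i U
    using that unfolding admissible_unitary_def unitary_mat_def n_def by auto
  have adm1: "admissible_unitary G i (1\<^sub>m n)" for i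
    unfolding admissible_unitary_def using one_unitary[of n] V by (auto simp: n_def)
  define idr where "idr = replicate m (1\<^sub>m n :: complex mat)"
  have idrR: "idr \<in> R" unfolding Rdef idr_def using adm1 by auto
  have Iv: "I!t \<in> verts G" if "t < m" for t
    using that setI unfolding m_def clips_def actions_def
    by (metis (no_types, lifting) DiffE UnE mem_Collect_eq nth_mem)
  have Sv: "S i \<subseteq> verts G" if "i \<in> verts G" for i
    using that unfolding S_def parents_def by auto
  have D: "Dset R t = S (I!t)" if t: "t < m" for t
  proof
    show "Dset R t \<subseteq> S (I!t)"
    proof
      fix j assume "j \<in> Dset R t"
      then obtain Us where j1: "1 \<le> j" and Us: "Us \<in> R" and tl: "t < length Us"
        and jd: "j \<le> dim_row (Us!t)" and ne: "Us!t $$ (j-1,j-1) \<noteq> 1"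
        unfolding Dset_def by auto
      have a: "admissible_unitary G (I!t) (Us!t)" using Us t unfolding Rdef by auto
      have "j \<le> n" using admc[OF a] jd by auto
      hence jv: "j \<in> verts G" using j1 V by auto
      show "j \<in> S (I!t)"
      proof (rule ccontr)
        assume "j \<notin> S (I!t)"
        hence "Us!t $$ (j-1,j-1) = 1" using a jv unfolding admissible_unitary_def S_def by auto
        thus False using ne by simp
      qed
    qed
  next
    show "S (I!t) \<subseteq> Dset R t"
    proof
      fix j assume jS: "j \<in> S (I!t)"
      hence jv: "j \<in> verts G" using Sv Iv t by auto
      define Us where "Us = idr[t := flipm n (j-1)]"
      have af: "admissible_unitary G (I!t) (flipm n (j-1))"
        unfolding admissible_unitary_def
      proof (intro conjI ballI impI)
        show "unitary_mat (fst G) (flipm n (j - 1))" using flipm_unitary n_def by simp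
      next
        fix a b assume a: "a \<in> verts G" and b: "b \<in> verts G"
          and nab: "\<not> (a \<in> insert (I ! t) (parents G (I ! t)) \<and> b \<in> insert (I ! t) (parents G (I ! t)))"
        have "a \<noteq> j \<or> a \<noteq> b" using nab jS unfolding S_def by auto
        thus "flipm n (j - 1) $$ (a - 1, b - 1) = (if a = b then 1 else 0)"
          using a b jv V unfolding flipm_def by auto
      qed
      have UsR: "Us \<in> R" unfolding Rdef Us_def using af adm1 t
        by (auto simp: idr_def nth_list_update)
      have "Us!t = flipm n (j-1)" unfolding Us_def idr_def using t by simp
      moreover have "flipm n (j-1) $$ (j-1,j-1) \<noteq> 1" "j \<le> dim_row (flipm n (j-1))" "1 \<le> j"
        using jv V unfolding flipm_def by auto
      ultimately show "j \<in> Dset R t" unfolding Dset_def using UsR t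
        by (auto simp: Us_def idr_def intro!: bexI[of _ Us])
    qed
  qed
  have lenR: "length Us = m" if "Us \<in> R" for Us using that Rdef by auto
  have par_lt: "w < i" if "w \<in> parents G i" for w i using that Elt unfolding parents_def by auto
  have E: "Erec R = edges G"
  proof
    show "Erec R \<subseteq> edges G"
    proof
      fix x assume "x \<in> Erec R"
      then obtain w i Us t where x: "x = (w,i)" and wi: "w < i" and Us: "Us \<in> R" and t: "t < length Us"
        and w: "w \<in> Dset R t" and i: "i \<in> Dset R t" and mx: "\<forall>j\<in>Dset R t. j \<le> i"
        unfolding Erec_def by blast
      have tm: "t < m" using lenR[OF Us] t by simp
      note DD = D[OF tm]
      have "I!t \<le> i" using mx DD unfolding S_def by auto
      moreover have "i \<in> S (I!t)" using i DD by simp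
      ultimately have "i = I!t" unfolding S_def using par_lt by fastforce
      moreover have "w \<in> S (I!t)" using w DD by simp
      ultimately have "w \<in> parents G i" using wi unfolding S_def by auto
      thus "x \<in> edges G" using x unfolding parents_def by auto
    qed
  next
    show "edges G \<subseteq> Erec R"
    proof
      fix x assume xe: "x \<in> edges G"
      obtain w i where x: "x = (w,i)" by (cases x)
      have wi: "w < i" using xe x Elt by auto
      have wv: "w \<in> verts G" and iv: "i \<in> verts G" using xe x Esub by auto
      have wp: "w \<in> parents G i" using wv xe x unfolding parents_def by auto
      have "i \<notin> percepts G" using wp unfolding percepts_def by auto
      hence "i \<in> set I" using iv setI unfolding clips_def by auto
      then obtain t where t: "t < m" and it: "I!t = i" unfolding m_def by (metis in_set_conv_nth)
      have "\<forall>j\<in>Dset R t. j \<le> i" using D[OF t] it par_lt unfolding S_def by fastforce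
      moreover have "w \<in> Dset R t" "i \<in> Dset R t" using D[OF t] it wp unfolding S_def by auto
      ultimately show "x \<in> Erec R" unfolding Erec_def using x wi idrR lenR[OF idrR] t by blast
    qed
  qed
  have ex: "\<exists>Us. Us \<in> R" using idrR by blast
  define U0 where "U0 = (SOME Us. Us \<in> R)"
  have U0: "U0 \<in> R" unfolding U0_def using someI_ex[OF ex] .
  have "length U0 = m" using lenR[OF U0] .
  hence "hd U0 = U0!0" using m1 by (cases U0) auto
  moreover have "admissible_unitary G (I!0) (U0!0)" using U0 m1 unfolding Rdef by auto
  ultimately have "dim_row (hd U0) = n" using admc by auto
  thus ?thesis unfolding recover_def using E R_def U0_def n_def by (cases G) (auto simp: edges_def)
qed

theorem lemma1:
  shows "bij_betw routing ocDAG ocROUTING"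
  unfolding bij_betw_def ocROUTING_def
  by (auto intro: inj_on_inverseI[where g = recover] recover_routing)

end
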